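(* Let $G$ be a finite metric graph and let $B\subset V$ be a set of vertices containing all boundary vertices and all proper core vertices of $G$. Let $\lambda\in\mathbb{R}$ and let $f\in\ker(-\Delta_G-\lambda)$ satisfy $f(v)=0$ for all $v\in B$. Then $f(v)=0$ for all $v\in V$.
   Context: A finite metric graph $G$ has finite vertex set $V$ and finite edge set $E$ (loops and multiple edges allowed) with lengths $L:E\to(0,\infty)$, each edge identified with $[0,L(e)]$. $-\Delta_G$ denotes the Laplacian on $G$ with Kirchhoff vertex conditions: it acts as $-f_e''$ on each edge, with domain consisting of functions that are edgewise $H^2$, continuous at every vertex (with common value $f(v)$), and satisfy $\sum_{t(e)=v} f_e'(L(e)) - \sum_{o(e)=v} f_e'(0)=0$ at every vertex $v$ (where $o(e),t(e)$ are the vertices identified with $0$ and $L(e)$). The core of $G$ is the largest subgraph of $G$ without vertices of degree one. A boundary vertex is a vertex of degree one. A proper core vertex is a vertex $v$ such that all edges attached to $v$ belong to the core of $G$. *)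

theory Defs
  imports "HOL-Analysis.Analysis"
begin

text \<open>A finite metric graph is given by a finite vertex set V, a finite edge set E
  (loops and multiple edges allowed, edges are abstract objects), origin and terminal
  maps org, trm and lengths L. Edge e is identified with the interval [0, L e], with 0
  at org e and L e at trm e.\<close>

definition metric_graph ::
  "'v set \<Rightarrow> 'e set \<Rightarrow> ('e \<Rightarrow> 'v) \<Rightarrow> ('e \<Rightarrow> 'v) \<Rightarrow> ('e \<Rightarrow> real) \<Rightarrow> bool" where
  "metric_graph V E org trm L \<longleftrightarrow> finite V \<and> finite E \<and> org ` E \<subseteq> V \<and> trm ` E \<subseteq> V
     \<and> (\<forall>e\<in>E. L e > 0)"

text \<open>Degree of a vertex in the (sub)graph with edge set F (a loop counts twice).\<close>
definition gdegree :: "'e set \<Rightarrow> ('e \<Rightarrow> 'v) \<Rightarrow> ('e \<Rightarrow> 'v) \<Rightarrow> 'v \<Rightarrow> nat" where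
  "gdegree F org trm v = card {e\<in>F. org e = v} + card {e\<in>F. trm e = v}"

text \<open>Edges of the core: the largest subgraph without vertices of degree one
  (the union of all edge subsets in which no vertex has degree one).\<close>
definition core_edges :: "'e set \<Rightarrow> ('e \<Rightarrow> 'v) \<Rightarrow> ('e \<Rightarrow> 'v) \<Rightarrow> 'e set" where
  "core_edges E org trm = \<Union>{F. F \<subseteq> E \<and> (\<forall>v. gdegree F org trm v \<noteq> 1)}"

definition boundary_vertex :: "'e set \<Rightarrow> ('e \<Rightarrow> 'v) \<Rightarrow> ('e \<Rightarrow> 'v) \<Rightarrow> 'v \<Rightarrow> bool" where
  "boundary_vertex E org trm v \<longleftrightarrow> gdegree E org trm v = 1"

definition proper_core_vertex :: "'e set \<Rightarrow> ('e \<Rightarrow> 'v) \<Rightarrow> ('e \<Rightarrow> 'v) \<Rightarrow> 'v \<Rightarrow> bool" where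
  "proper_core_vertex E org trm v \<longleftrightarrow>
     (\<forall>e\<in>E. (org e = v \<or> trm e = v) \<longrightarrow> e \<in> core_edges E org trm)"

text \<open>f = (fe, fv) lies in ker(-Delta_G - lambda): on each edge fe e is (classically)
  twice differentiable on [0, L e] with -fe'' = lambda fe; continuity at vertices with
  common value fv v; Kirchhoff condition at every vertex.  (Every H^2 weak solution
  of -u'' = lambda u on an interval is classical, so this is the kernel.)\<close>
definition in_kernel ::
  "'v set \<Rightarrow> 'e set \<Rightarrow> ('e \<Rightarrow> 'v) \<Rightarrow> ('e \<Rightarrow> 'v) \<Rightarrow> ('e \<Rightarrow> real) \<Rightarrow> real
    \<Rightarrow> ('e \<Rightarrow> real \<Rightarrow> complex) \<Rightarrow> ('v \<Rightarrow> complex) \<Rightarrow> bool" where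
  "in_kernel V E org trm L lam fe fv \<longleftrightarrow>
     (\<forall>e\<in>E. \<exists>d. \<forall>x\<in>{0..L e}.
        (fe e has_vector_derivative d x) (at x within {0..L e}) \<and>
        (d has_vector_derivative (- complex_of_real lam * fe e x)) (at x within {0..L e}))
   \<and> (\<forall>e\<in>E. fe e 0 = fv (org e) \<and> fe e (L e) = fv (trm e))
   \<and> (\<forall>v\<in>V. (\<Sum>e\<in>{e\<in>E. trm e = v}. vector_derivative (fe e) (at (L e) within {0..L e}))
           - (\<Sum>e\<in>{e\<in>E. org e = v}. vector_derivative (fe e) (at 0 within {0..L e})) = 0)"

end

theory Submission
  imports Defs
begin
lemma energy_deriv:
  fixes f d :: "real \<Rightarrow> complex"
  assumes f: "(f has_vector_derivative d x) (at x within S)"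
    and d: "(d has_vector_derivative (- complex_of_real lam * f x)) (at x within S)"
  shows "((\<lambda>x. f x \<bullet> f x + d x \<bullet> d x) has_real_derivative 2*(1-lam)*(f x \<bullet> d x)) (at x within S)"
proof -
  have f': "(f has_derivative (\<lambda>h. h *\<^sub>R d x)) (at x within S)"
    using f by (simp add: has_vector_derivative_def)
  have d': "(d has_derivative (\<lambda>h. h *\<^sub>R (- complex_of_real lam * f x))) (at x within S)"
    using d by (simp add: has_vector_derivative_def)
  have "((\<lambda>x. f x \<bullet> f x + d x \<bullet> d x) has_derivative
     (\<lambda>h. (f x \<bullet> (h *\<^sub>R d x) + (h *\<^sub>R d x) \<bullet> f x) + (d x \<bullet> (h *\<^sub>R (- complex_of_real lam * f x)) + (h *\<^sub>R (- complex_of_real lam * f x)) \<bullet> d x))) (at x within S)"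
    by (intro derivative_intros f' d')
  moreover have "(\<lambda>h. (f x \<bullet> (h *\<^sub>R d x) + (h *\<^sub>R d x) \<bullet> f x) + (d x \<bullet> (h *\<^sub>R (- complex_of_real lam * f x)) + (h *\<^sub>R (- complex_of_real lam * f x)) \<bullet> d x))
      = (\<lambda>h. (2*(1-lam)*(f x \<bullet> d x)) * h)"
  proof
    fix h
    have e: "- complex_of_real lam * f x = (-lam) *\<^sub>R f x" by (simp add: scaleR_conv_of_real)
    show "(f x \<bullet> (h *\<^sub>R d x) + (h *\<^sub>R d x) \<bullet> f x) + (d x \<bullet> (h *\<^sub>R (- complex_of_real lam * f x)) + (h *\<^sub>R (- complex_of_real lam * f x)) \<bullet> d x)
      = (2*(1-lam)*(f x \<bullet> d x)) * h"
      unfolding e by (simp add: inner_commute algebra_simps)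
  qed
  ultimately have "((\<lambda>x. f x \<bullet> f x + d x \<bullet> d x) has_derivative (\<lambda>h. (2*(1-lam)*(f x \<bullet> d x)) * h)) (at x within S)"
    by metis
  then show ?thesis by (simp add: has_field_derivative_def)
qed

lemma ode_zero:
  fixes f d :: "real \<Rightarrow> complex"
  assumes D: "\<forall>x\<in>{0..L}. (f has_vector_derivative d x) (at x within {0..L}) \<and>
        (d has_vector_derivative (- complex_of_real lam * f x)) (at x within {0..L})"
    and a: "a \<in> {0..L}" "f a = 0" "d a = 0"
  shows "\<forall>x\<in>{0..L}. f x = 0"
proof -
  define En where "En x = f x \<bullet> f x + d x \<bullet> d x" for x
  define K where "K = \<bar>1 - lam\<bar>"
  have dE: "(En has_real_derivative 2*(1-lam)*(f x \<bullet> d x)) (at x within {0..L})"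
    if "x \<in> {0..L}" for x
    unfolding En_def using D that by (intro energy_deriv) auto
  have dEi: "(En has_real_derivative 2*(1-lam)*(f x \<bullet> d x)) (at x)"
    if "0 < x" "x < L" for x
  proof -
    have "at x within {0..L} = at x" using that by (intro at_within_interior) auto
    then show ?thesis using dE[of x] that by simp
  qed
  have nn: "En x \<ge> 0" for x unfolding En_def by simp
  have bound: "\<bar>2*(1-lam)*(f x \<bullet> d x)\<bar> \<le> K * En x" for x
  proof -
    have "\<bar>f x \<bullet> d x\<bar> \<le> norm (f x) * norm (d x)" by (rule Cauchy_Schwarz_ineq2)
    moreover have "2 * (norm (f x) * norm (d x)) \<le> norm (f x)^2 + norm (d x)^2"
      using sum_squares_bound[of "norm (f x)" "norm (d x)"] by (simp add: power2_eq_square)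
    moreover have "En x = norm (f x)^2 + norm (d x)^2"
      unfolding En_def by (simp add: dot_square_norm)
    ultimately have "2 * \<bar>f x \<bullet> d x\<bar> \<le> En x" by linarith
    then have "K * (2 * \<bar>f x \<bullet> d x\<bar>) \<le> K * En x"
      unfolding K_def by (intro mult_left_mono) auto
    moreover have "\<bar>2*(1-lam)*(f x \<bullet> d x)\<bar> = K * (2 * \<bar>f x \<bullet> d x\<bar>)"
      unfolding K_def abs_mult by simp
    ultimately show ?thesis by simp
  qed
  have cont: "continuous_on {0..L} En"
    unfolding continuous_on_eq_continuous_within
    using dE by (meson DERIV_continuous)
  have Ea: "En a = 0" unfolding En_def using a by simp
  have E0: "En x = 0" if x: "x \<in> {0..L}" for x
  proof (cases "a \<le> x")
    case True
    define Q where "Q y = En y * exp (-K*(y-a))" for y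
    have "Q a \<ge> Q x"
    proof (rule DERIV_nonpos_imp_decreasing_open[OF True])
      fix y assume y: "a < y" "y < x"
      have "(Q has_real_derivative 2*(1-lam)*(f y \<bullet> d y) * exp (-K*(y-a)) + En y * (exp (-K*(y-a)) * (-K))) (at y)"
        unfolding Q_def using dEi[of y] y a x
        by (auto intro!: derivative_eq_intros)
      moreover have "2*(1-lam)*(f y \<bullet> d y) * exp (-K*(y-a)) + En y * (exp (-K*(y-a)) * (-K)) \<le> 0"
      proof -
        have "2*(1-lam)*(f y \<bullet> d y) - K * En y \<le> 0" using bound[of y] by linarith
        then have "(2*(1-lam)*(f y \<bullet> d y) - K * En y) * exp (-K*(y-a)) \<le> 0"
          by (simp add: mult_nonpos_nonneg)
        then show ?thesis by (simp add: algebra_simps)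
      qed
      ultimately show "\<exists>z. (Q has_real_derivative z) (at y) \<and> z \<le> 0" by blast
    next
      show "continuous_on {a..x} Q" unfolding Q_def
        using a x by (intro continuous_intros continuous_on_subset[OF cont]) auto
    qed
    then have "Q x \<le> 0" using Ea unfolding Q_def by simp
    then have "En x * exp (-K*(x-a)) \<le> 0" unfolding Q_def .
    then have "En x \<le> 0" by (simp add: mult_le_0_iff)
    then show ?thesis using nn[of x] by linarith
  next
    case False
    define Q where "Q y = En y * exp (K*(y-a))" for y
    have "Q x \<le> Q a"
    proof (rule DERIV_nonneg_imp_increasing_open[of x a Q])
      show "x \<le> a" using False by simp
      fix y assume y: "x < y" "y < a"
      have "(Q has_real_derivative 2*(1-lam)*(f y \<bullet> d y) * exp (K*(y-a)) + En y * (exp (K*(y-a)) * K)) (at y)"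
        unfolding Q_def using dEi[of y] y a x
        by (auto intro!: derivative_eq_intros)
      moreover have "2*(1-lam)*(f y \<bullet> d y) * exp (K*(y-a)) + En y * (exp (K*(y-a)) * K) \<ge> 0"
      proof -
        have "2*(1-lam)*(f y \<bullet> d y) + K * En y \<ge> 0" using bound[of y] by linarith
        then have "(2*(1-lam)*(f y \<bullet> d y) + K * En y) * exp (K*(y-a)) \<ge> 0"
          by simp
        then show ?thesis by (simp add: algebra_simps)
      qed
      ultimately show "\<exists>z. (Q has_real_derivative z) (at y) \<and> z \<ge> 0" by blast
    next
      show "continuous_on {x..a} Q" unfolding Q_def
        using a x by (intro continuous_intros continuous_on_subset[OF cont]) auto
    qed
    then have "Q x \<le> 0" using Ea unfolding Q_def by simp
    then have "En x * exp (K*(x-a)) \<le> 0" unfolding Q_def .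
    then have "En x \<le> 0" by (simp add: mult_le_0_iff)
    then show ?thesis using nn[of x] by linarith
  qed
  show ?thesis
  proof
    fix x assume "x \<in> {0..L}"
    from E0[OF this] have "f x \<bullet> f x = 0" unfolding En_def
      by (metis add_nonneg_eq_0_iff inner_ge_zero)
    then show "f x = 0" by simp
  qed
qed

lemma gdegree_mono:
  assumes "finite E" "F \<subseteq> E"
  shows "gdegree F org trm v \<le> gdegree E org trm v"
  unfolding gdegree_def using assms
  by (intro add_mono card_mono) auto

lemma core_sub: "core_edges E org trm \<subseteq> E"
  unfolding core_edges_def by auto

lemma core_no_deg1:
  assumes "finite E"
  shows "gdegree (core_edges E org trm) org trm v \<noteq> 1"
proof
  let ?C = "core_edges E org trm"
  assume deg: "gdegree ?C org trm v = 1"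
  then obtain e where e: "e \<in> ?C" "org e = v \<or> trm e = v"
  proof -
    have "{e\<in>?C. org e = v} \<noteq> {} \<or> {e\<in>?C. trm e = v} \<noteq> {}"
    proof (rule ccontr)
      assume "\<not> ?thesis"
      then have "{e\<in>?C. org e = v} = {}" "{e\<in>?C. trm e = v} = {}" by auto
      then have "gdegree ?C org trm v = 0" unfolding gdegree_def by (simp only: card.empty)
      then show False using deg by simp
    qed
    then show ?thesis using that by blast
  qed
  then obtain F where F: "F \<subseteq> E" "\<forall>v. gdegree F org trm v \<noteq> 1" "e \<in> F"
    unfolding core_edges_def by auto
  have fF: "finite F" using F assms finite_subset by blast
  have "gdegree F org trm v \<ge> 1"
  proof -
    have "card {e\<in>F. org e = v} \<ge> 1 \<or> card {e\<in>F. trm e = v} \<ge> 1"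
    proof (cases "org e = v")
      case True
      then have "{e\<in>F. org e = v} \<noteq> {}" using F by auto
      then show ?thesis using fF by (simp add: Suc_le_eq card_gt_0_iff)
    next
      case False
      then have "{e\<in>F. trm e = v} \<noteq> {}" using F e by auto
      then show ?thesis using fF by (simp add: Suc_le_eq card_gt_0_iff)
    qed
    then show ?thesis unfolding gdegree_def by auto
  qed
  moreover have "gdegree F org trm v \<noteq> 1" using F by blast
  ultimately have "gdegree F org trm v \<ge> 2" by linarith
  moreover have "gdegree F org trm v \<le> gdegree ?C org trm v"
    using F core_sub[of E org trm] assms unfolding core_edges_def
    by (intro gdegree_mono) (auto intro: finite_subset)
  ultimately show False using deg by simp
qed

theorem lemma4p5:
  fixes V :: "'v set" and E :: "'e set" and org trm :: "'e \<Rightarrow> 'v" and L :: "'e \<Rightarrow> real"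
    and B :: "'v set" and lam :: real
    and fe :: "'e \<Rightarrow> real \<Rightarrow> complex" and fv :: "'v \<Rightarrow> complex"
  assumes "metric_graph V E org trm L"
    and "B \<subseteq> V"
    and "\<forall>v\<in>V. boundary_vertex E org trm v \<longrightarrow> v \<in> B"
    and "\<forall>v\<in>V. proper_core_vertex E org trm v \<longrightarrow> v \<in> B"
    and "in_kernel V E org trm L lam fe fv"
    and "\<forall>v\<in>B. fv v = 0"
  shows "\<forall>v\<in>V. fv v = 0"
proof -
  note mg = assms(1)[unfolded metric_graph_def]
  have finE: "finite E" using mg by simp
  have Lpos: "\<And>e. e \<in> E \<Longrightarrow> L e > 0" using mg by simp
  have orgV: "\<And>e. e \<in> E \<Longrightarrow> org e \<in> V" and trmV: "\<And>e. e \<in> E \<Longrightarrow> trm e \<in> V" using mg by auto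
  note ker = assms(5)[unfolded in_kernel_def]
  have ODE: "\<exists>d. \<forall>x\<in>{0..L e}.
        (fe e has_vector_derivative d x) (at x within {0..L e}) \<and>
        (d has_vector_derivative (- complex_of_real lam * fe e x)) (at x within {0..L e})"
    if "e \<in> E" for e using ker that by blast
  have cont0: "\<And>e. e \<in> E \<Longrightarrow> fe e 0 = fv (org e)" and contL: "\<And>e. e \<in> E \<Longrightarrow> fe e (L e) = fv (trm e)"
    using ker by auto
  have kirch: "\<And>v. v \<in> V \<Longrightarrow> (\<Sum>e\<in>{e\<in>E. trm e = v}. vector_derivative (fe e) (at (L e) within {0..L e}))
           - (\<Sum>e\<in>{e\<in>E. org e = v}. vector_derivative (fe e) (at 0 within {0..L e})) = 0"
    using ker by blast
  define Z where "Z e \<longleftrightarrow> (\<forall>x\<in>{0..L e}. fe e x = 0)" for e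
  define C where "C = core_edges E org trm"
  define F where "F = C \<union> {e\<in>E. \<not> Z e}"
  have CE: "C \<subseteq> E" unfolding C_def by (rule core_sub)
  have FE: "F \<subseteq> E" unfolding F_def using CE by auto
  have finF: "finite F" using FE finE finite_subset by blast
  have Dz: "vector_derivative (fe e) (at x within {0..L e}) = 0"
    if "e \<in> E" "Z e" "x \<in> {0..L e}" for e x
  proof -
    have h0: "((\<lambda>_. 0::complex) has_vector_derivative 0) (at x within {0..L e})" by simp
    have hz: "\<And>y. y \<in> {0..L e} \<Longrightarrow> fe e y = 0" using that unfolding Z_def by auto
    have "(fe e has_vector_derivative 0) (at x within {0..L e})"
      by (rule has_vector_derivative_transform[OF that(3) hz h0])
    then show ?thesis
      using vector_derivative_within_cbox[of 0 "L e" x, unfolded cbox_interval] Lpos[OF that(1)] that(3)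
      by blast
  qed
  have zero_edge: "Z e" if e: "e \<in> E" and a: "a = 0 \<or> a = L e" and fa: "fe e a = 0"
    and da: "vector_derivative (fe e) (at a within {0..L e}) = 0" for e a
  proof -
    obtain d where d: "\<forall>x\<in>{0..L e}.
        (fe e has_vector_derivative d x) (at x within {0..L e}) \<and>
        (d has_vector_derivative (- complex_of_real lam * fe e x)) (at x within {0..L e})"
      using ODE[OF e] by blast
    have aI: "a \<in> {0..L e}" using a Lpos[OF e] by auto
    have "vector_derivative (fe e) (at a within {0..L e}) = d a"
      using vector_derivative_within_cbox[of 0 "L e" a, unfolded cbox_interval] Lpos[OF e] aI d
      by blast
    then have "d a = 0" using da by simp
    then show ?thesis unfolding Z_def using ode_zero[OF d aI fa] by blast
  qed
  have noDeg1: "gdegree F org trm v \<noteq> 1" for v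
  proof
    assume deg: "gdegree F org trm v = 1"
    let ?A = "{e\<in>F. org e = v}" and ?T = "{e\<in>F. trm e = v}"
    have deg': "card ?A + card ?T = 1" using deg unfolding gdegree_def .
    have "?A \<union> ?T \<noteq> {}"
    proof
      assume "?A \<union> ?T = {}"
      then have "?A = {}" "?T = {}" by auto
      then show False using deg' by (simp only: card.empty)
    qed
    then obtain e0 where e0: "e0 \<in> F" "org e0 = v \<or> trm e0 = v" by blast
    have vV: "v \<in> V" using e0 FE orgV trmV by blast
    have fvz: "fv v = 0"
    proof (cases "\<exists>e'\<in>E - F. org e' = v \<or> trm e' = v")
      case True
      then obtain e' where e': "e' \<in> E" "e' \<notin> F" "org e' = v \<or> trm e' = v" by blast
      then have "Z e'" unfolding F_def by auto
      then have "fe e' 0 = 0" "fe e' (L e') = 0" unfolding Z_def using Lpos[OF e'(1)] by auto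
      then show ?thesis using e' cont0 contL by metis
    next
      case False
      then have "{e\<in>E. org e = v} = ?A" "{e\<in>E. trm e = v} = ?T" using FE by auto
      then have "gdegree E org trm v = 1" using deg' unfolding gdegree_def by simp
      then show ?thesis using assms(3,6) vV unfolding boundary_vertex_def by blast
    qed
    have sT: "(\<Sum>e\<in>{e\<in>E. trm e = v}. vector_derivative (fe e) (at (L e) within {0..L e}))
        = (\<Sum>e\<in>?T. vector_derivative (fe e) (at (L e) within {0..L e}))"
      by (rule sum.mono_neutral_right) (use finE FE Lpos less_imp_le[OF Lpos] in \<open>auto simp: F_def intro!: Dz\<close>)
    have sA: "(\<Sum>e\<in>{e\<in>E. org e = v}. vector_derivative (fe e) (at 0 within {0..L e}))
        = (\<Sum>e\<in>?A. vector_derivative (fe e) (at 0 within {0..L e}))"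
      by (rule sum.mono_neutral_right) (use finE FE Lpos less_imp_le[OF Lpos] in \<open>auto simp: F_def intro!: Dz\<close>)
    have K: "(\<Sum>e\<in>?T. vector_derivative (fe e) (at (L e) within {0..L e}))
           - (\<Sum>e\<in>?A. vector_derivative (fe e) (at 0 within {0..L e})) = 0"
      using kirch[OF vV] sT sA by simp
    have "card ?A = 1 \<and> card ?T = 0 \<or> card ?A = 0 \<and> card ?T = 1" using deg' by linarith
    then show False
    proof
      assume c: "card ?A = 1 \<and> card ?T = 0"
      then obtain e where Ae: "?A = {e}" by (metis card_1_singletonE)
      have Te: "?T = {}" using c finF by simp
      have eF: "e \<in> F" "org e = v" using Ae by auto
      have "vector_derivative (fe e) (at 0 within {0..L e}) = 0" using K Ae Te by simp
      then have "Z e" using zero_edge[of e 0] eF FE fvz cont0 by auto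
      then have eC: "e \<in> C" using eF unfolding F_def by auto
      have "{e\<in>C. org e = v} = {e}" using Ae eC eF unfolding F_def by auto
      moreover have "{e\<in>C. trm e = v} = {}" using Te unfolding F_def by auto
      ultimately have "gdegree C org trm v = 1" unfolding gdegree_def by (simp only: card.empty card_1_singleton_iff) auto
      then show False using core_no_deg1[OF finE, of org trm v] unfolding C_def by simp
    next
      assume c: "card ?A = 0 \<and> card ?T = 1"
      then obtain e where Te: "?T = {e}" by (metis card_1_singletonE)
      have Ae: "?A = {}" using c finF by simp
      have eF: "e \<in> F" "trm e = v" using Te by auto
      have "vector_derivative (fe e) (at (L e) within {0..L e}) = 0" using K Ae Te by simp
      then have "Z e" using zero_edge[of e "L e"] eF FE fvz contL by auto
      then have eC: "e \<in> C" using eF unfolding F_def by auto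
      have "{e\<in>C. trm e = v} = {e}" using Te eC eF unfolding F_def by auto
      moreover have "{e\<in>C. org e = v} = {}" using Ae unfolding F_def by auto
      ultimately have "gdegree C org trm v = 1" unfolding gdegree_def by (simp only: card.empty card_1_singleton_iff) auto
      then show False using core_no_deg1[OF finE, of org trm v] unfolding C_def by simp
    qed
  qed
  have FC: "F \<subseteq> C" unfolding C_def core_edges_def using FE noDeg1 by blast
  show ?thesis
  proof
    fix v assume vV: "v \<in> V"
    show "fv v = 0"
    proof (cases "proper_core_vertex E org trm v")
      case True
      then show ?thesis using assms(4,6) vV by blast
    next
      case False
      then obtain e where e: "e \<in> E" "org e = v \<or> trm e = v" "e \<notin> C"
        unfolding proper_core_vertex_def C_def by blast
      then have "Z e" using FC unfolding F_def by auto
      then have "fe e 0 = 0" "fe e (L e) = 0" unfolding Z_def using Lpos[OF e(1)] by auto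
      then show ?thesis using e cont0 contL by metis
    qed
  qed
qed
end
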